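(* Let $A$ be a finite totally ordered alphabet, $w\in A^{n}$ ($n\ge1$), $\pi=\pi(w)$ its standard permutation, $l$ the lcm of the cycle lengths of $\pi$, and $T(w)$ the table of $w$. For $i\in[n]$ let $r=r(i)$ be the length of the cycle of $\pi$ containing $i$, let $u=u(i)$ be the $i$-th row of $T(w)$ and let $x$ be the prefix of $u$ of length $r$. Then: (i) $x$ is the root of $u$ (so $x$ is primitive and $u=x^{l/r}$); (ii) every conjugate $y$ of $x$ occurs as the root of some row of $T(w)$, and the number of rows with root $y$ equals the number of rows with root $x$; (iii) the rows of $T(w)$ are in lexicographic (nondecreasing) order from top to bottom; (iv) the final column of $T(w)$, read from top to bottom, is $w$.
   Context: $[n]=\{0<1<\cdots<n-1\}$. Standard permutation: let $f(w)$ be the letters of $w$ sorted in nondecreasing order; for each letter $a$ occurring in $w$, $\pi_{a}$ is the unique order-preserving injective partial map on $[n]$ whose domain is the set of positions (indexed from $0$) of $a$ in $f(w)$ and whose range is the set of positions of $a$ in $w$; $\pi(w)=\bigcup_{a}\pi_{a}$, a permutation of $[n]$. Maps are composed left to right and $i\cdot\phi$ denotes the image of $i$. For $u=b_{1}\cdots b_{m}$ put $\pi_{u}=\pi_{b_{1}}\cdots\pi_{b_{m}}$; for each $i$ and $m$ there is a unique $u\in A^{m}$ with $i\cdot\pi_{u}$ defined. The table $T(w)$ is the $n\times l$ array whose $i$-th row ($i\in[n]$) is the unique $u\in A^{l}$ such that $i\cdot\pi_{u}$ is defined. The root of a word $u$ is the shortest $x$ with $u=x^{t}$, $t\ge1$;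 a word is primitive if not a proper power; $xy$ and $yx$ are conjugates. *)

theory Defs
  imports Main
begin

text \<open>Words are lists over a linearly ordered type; positions are indexed from 0.\<close>

definition occ_pos :: "'a \<Rightarrow> 'a list \<Rightarrow> nat list" where
  "occ_pos a v = filter (\<lambda>p. v ! p = a) [0..<length v]"

text \<open>The partial map pi_a: the unique order-preserving bijection from the positions
  of a in f(w) = sort w onto the positions of a in w.\<close>
definition pi_letter :: "'a::linorder list \<Rightarrow> 'a \<Rightarrow> nat \<Rightarrow> nat option" where
  "pi_letter w a j =
     (if j \<in> set (occ_pos a (sort w))
      then Some (occ_pos a w ! length (filter (\<lambda>p. sort w ! p = a) [0..<j]))
      else None)"

text \<open>The standard permutation pi(w), the union of the maps pi_a, as a total function
  on nat which is the identity outside [n].\<close>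
definition std_perm :: "'a::linorder list \<Rightarrow> nat \<Rightarrow> nat" where
  "std_perm w j = (if j < length w then the (pi_letter w (sort w ! j) j) else j)"

definition cycle_len :: "'a::linorder list \<Rightarrow> nat \<Rightarrow> nat" where
  "cycle_len w i = (LEAST k. 0 < k \<and> (std_perm w ^^ k) i = i)"

definition table_width :: "'a::linorder list \<Rightarrow> nat" where
  "table_width w = Lcm (cycle_len w ` {..<length w})"

text \<open>pi_u = pi_{b1} ... pi_{bm}, composed left to right (i . pi_{b1} first).\<close>
fun pi_word :: "'a::linorder list \<Rightarrow> 'a list \<Rightarrow> nat \<Rightarrow> nat option" where
  "pi_word w [] i = Some i"
| "pi_word w (b # u) i =
     (case pi_letter w b i of None \<Rightarrow> None | Some j \<Rightarrow> pi_word w u j)"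

definition table_row_len :: "'a set \<Rightarrow> 'a::linorder list \<Rightarrow> nat \<Rightarrow> nat \<Rightarrow> 'a list" where
  "table_row_len A w m i =
     (THE u. set u \<subseteq> A \<and> length u = m \<and> pi_word w u i \<noteq> None)"

definition table_row :: "'a set \<Rightarrow> 'a::linorder list \<Rightarrow> nat \<Rightarrow> 'a list" where
  "table_row A w i = table_row_len A w (table_width w) i"

definition wpow :: "'a list \<Rightarrow> nat \<Rightarrow> 'a list" where
  "wpow x t = concat (replicate t x)"

definition is_root :: "'a list \<Rightarrow> 'a list \<Rightarrow> bool" where
  "is_root x u \<longleftrightarrow> (\<exists>t\<ge>1. u = wpow x t) \<and>
     (\<forall>y t. t \<ge> 1 \<and> u = wpow y t \<longrightarrow> length x \<le> length y)"

definition root :: "'a list \<Rightarrow> 'a list" where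
  "root u = (THE x. is_root x u)"

definition primitive :: "'a list \<Rightarrow> bool" where
  "primitive x \<longleftrightarrow> (\<forall>y t. x = wpow y t \<longrightarrow> t = 1)"

definition conjugate :: "'a list \<Rightarrow> 'a list \<Rightarrow> bool" where
  "conjugate x y \<longleftrightarrow> (\<exists>p q. x = p @ q \<and> y = q @ p)"

end

theory Submission
  imports Defs
begin

lemma len_filter_nth: "length (filter (\<lambda>p. v ! p = a) [0..<length v]) = length (filter (\<lambda>x. x = a) v)"
proof -
  have "filter (\<lambda>x. x = a) v = filter (\<lambda>x. x = a) (map (nth v) [0..<length v])" by (simp add: map_nth)
  also have "\<dots> = map (nth v) (filter (\<lambda>p. v ! p = a) [0..<length v])" by (simp add: filter_map o_def)
  finally show ?thesis by simp
qed

lemma len_filter_sort: "length (filter (\<lambda>x. x = a) (sort w)) = length (filter (\<lambda>x. x = a) w)"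
  by (simp add: filter_sort)

lemma len_occ_pos: "length (occ_pos a (sort w)) = length (occ_pos a w)"
  unfolding occ_pos_def using len_filter_nth[of "sort w" a] len_filter_nth[of w a] len_filter_sort[of a w]
  by simp

lemma pi_letter_eq:
  assumes "j < length w"
  shows "pi_letter w b j = (if b = sort w ! j then Some (std_perm w j) else None)"
  using assms unfolding pi_letter_def std_perm_def occ_pos_def by auto

definition kk :: "'a::linorder list \<Rightarrow> nat \<Rightarrow> nat" where
  "kk w j = length (filter (\<lambda>p. sort w ! p = sort w ! j) [0..<j])"

lemma std_perm_eq: "j < length w \<Longrightarrow> std_perm w j = occ_pos (sort w ! j) w ! kk w j"
  unfolding std_perm_def pi_letter_def kk_def occ_pos_def by auto

lemma filter_split_len:
  assumes "i < j" "P i"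
  shows "length (filter P [0..<i]) < length (filter P [0..<j])"
proof -
  have "[0..<j] = [0..<i] @ [i..<j]" using assms by (metis le0 less_imp_le_nat upt_add_eq_append add_0 le_add_diff_inverse)
  moreover have "[i..<j] = i # [Suc i..<j]" using assms by (simp add: upt_conv_Cons)
  ultimately show ?thesis using assms by simp
qed

lemma kk_less:
  assumes "j < length w"
  shows "kk w j < length (occ_pos (sort w ! j) w)"
proof -
  have "kk w j < length (occ_pos (sort w ! j) (sort w))"
    unfolding kk_def occ_pos_def using filter_split_len[of j "length w" "\<lambda>p. sort w ! p = sort w ! j"] assms
    by simp
  then show ?thesis using len_occ_pos by metis
qed

lemma occ_pos_nth:
  assumes "k < length (occ_pos a w)"
  shows "occ_pos a w ! k < length w \<and> w ! (occ_pos a w ! k) = a"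
proof -
  have "occ_pos a w ! k \<in> set (occ_pos a w)" using assms by simp
  then show ?thesis unfolding occ_pos_def by auto
qed

lemma P1:
  assumes "j < length w"
  shows "std_perm w j < length w \<and> w ! (std_perm w j) = sort w ! j"
  using std_perm_eq[OF assms] occ_pos_nth[OF kk_less[OF assms]] by simp

lemma occ_pos_sorted: "sorted_wrt (<) (occ_pos a w)"
  unfolding occ_pos_def by (intro sorted_wrt_filter) simp

lemma P2:
  assumes "i < j" "j < length w" "sort w ! i = sort w ! j"
  shows "std_perm w i < std_perm w j"
proof -
  have "kk w i < kk w j" unfolding kk_def using assms filter_split_len[of i j "\<lambda>p. sort w ! p = sort w ! j"]
    by simp
  then show ?thesis using std_perm_eq[of i w] std_perm_eq[OF assms(2)] assms kk_less[OF assms(2)]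
    sorted_wrt_nth_less[OF occ_pos_sorted] by simp
qed

lemma P_inj: "inj (std_perm w)"
proof (rule injI)
  fix i j assume h: "std_perm w i = std_perm w j"
  show "i = j"
  proof (rule ccontr)
    assume "i \<noteq> j"
    have ne: "\<And>i j. i < j \<Longrightarrow> std_perm w i = std_perm w j \<Longrightarrow> False"
    proof -
      fix i j assume ij: "i < j" "std_perm w i = std_perm w j"
      show False
      proof (cases "j < length w")
        case True
        then have "i < length w" using ij by simp
        show False
        proof (cases "sort w ! i = sort w ! j")
          case True then show False using P2[of i j w] ij \<open>j < length w\<close> by simp
        next
          case False then show False using P1[of i w] P1[of j w] ij \<open>j < length w\<close> \<open>i < length w\<close> by metis
        qed
      next
        case False
        then have "std_perm w j = j" unfolding std_perm_def by simp
        show False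
        proof (cases "i < length w")
          case True then show False using ij P1[of i w] False \<open>std_perm w j = j\<close> by simp
        next
          case F: False then have "std_perm w i = i" unfolding std_perm_def by simp
          then show False using ij \<open>std_perm w j = j\<close> by simp
        qed
      qed
    qed
    show False using ne[of i j] ne[of j i] h \<open>i \<noteq> j\<close> by (metis linorder_neqE_nat)
  qed
qed


lemma iter_lt: "i < length w \<Longrightarrow> (std_perm w ^^ k) i < length w"
  by (induction k) (auto simp: P1)

lemma inj_iter: "inj (std_perm w ^^ k)"
  using P_inj inj_fn by blast

lemma exists_period:
  assumes "i < length w"
  shows "\<exists>k>0. (std_perm w ^^ k) i = i"
proof -
  let ?f = "\<lambda>k. (std_perm w ^^ k) i"
  have "?f ` {..length w} \<subseteq> {..<length w}" using iter_lt[OF assms] by auto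
  then have "card (?f ` {..length w}) \<le> length w" by (metis card_lessThan card_mono finite_lessThan)
  then have "\<not> inj_on ?f {..length w}"
  proof -
    assume c: "card (?f ` {..length w}) \<le> length w"
    show ?thesis
    proof
      assume "inj_on ?f {..length w}"
      then have "card (?f ` {..length w}) = Suc (length w)" using card_image by fastforce
      then show False using c by simp
    qed
  qed
  then obtain a b where ab: "a \<noteq> b" "?f a = ?f b" unfolding inj_on_def by blast
  have gen: "\<And>a b. a < b \<Longrightarrow> ?f a = ?f b \<Longrightarrow> ?f (b - a) = i"
  proof -
    fix a b :: nat assume "a < b" "?f a = ?f b"
    then have "(std_perm w ^^ a) ((std_perm w ^^ (b - a)) i) = (std_perm w ^^ a) i"
      by (metis funpow_add comp_apply le_add_diff_inverse less_imp_le_nat)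
    then show "?f (b - a) = i" using inj_iter[where w=w and k=a] by (simp add: inj_def)
  qed
  show ?thesis
  proof (cases "a < b")
    case True then show ?thesis using gen[of a b] ab by (intro exI[of _ "b - a"]) auto
  next
    case False then have "b < a" using ab by simp
    then show ?thesis using gen[of b a] ab by (intro exI[of _ "a - b"]) auto
  qed
qed

lemma cyc_pos: "i < length w \<Longrightarrow> 0 < cycle_len w i \<and> (std_perm w ^^ cycle_len w i) i = i"
  unfolding cycle_len_def using exists_period by (metis (mono_tags, lifting) LeastI)

lemma iter_mod: "i < length w \<Longrightarrow> (std_perm w ^^ k) i = (std_perm w ^^ (k mod cycle_len w i)) i"
proof -
  assume i: "i < length w"
  let ?c = "cycle_len w i"
  have m: "(std_perm w ^^ (m * ?c)) i = i" for m
  proof (induction m)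
    case 0 then show ?case by simp
  next
    case (Suc m)
    have "(std_perm w ^^ (Suc m * ?c)) i = (std_perm w ^^ ?c) ((std_perm w ^^ (m * ?c)) i)"
      by (simp only: mult_Suc funpow_add comp_apply)
    then show ?case using Suc cyc_pos[OF i] by simp
  qed
  have "(std_perm w ^^ k) i = (std_perm w ^^ (k mod ?c + (k div ?c) * ?c)) i" by (simp only: mod_div_mult_eq)
  also have "\<dots> = (std_perm w ^^ (k mod ?c)) ((std_perm w ^^ ((k div ?c) * ?c)) i)"
    by (simp only: funpow_add comp_apply)
  finally show ?thesis using m by simp
qed

lemma cyc_dvd: "i < length w \<Longrightarrow> (std_perm w ^^ k) i = i \<longleftrightarrow> cycle_len w i dvd k"
proof
  assume i: "i < length w" and h: "(std_perm w ^^ k) i = i"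
  let ?c = "cycle_len w i"
  have e: "(std_perm w ^^ (k mod ?c)) i = i" using iter_mod[OF i, of k] h by (rule subst)
  have lt: "k mod ?c < ?c" using cyc_pos[OF i] by simp
  have "\<not> (0 < k mod ?c \<and> (std_perm w ^^ (k mod ?c)) i = i)"
    using not_less_Least[OF lt[unfolded cycle_len_def]] unfolding cycle_len_def .
  then have "k mod ?c = 0" using e by (metis gr0I)
  then show "?c dvd k" by (rule mod_0_imp_dvd)
next
  assume i: "i < length w" and "cycle_len w i dvd k"
  then have "k mod cycle_len w i = 0" by simp
  then show "(std_perm w ^^ k) i = i" using iter_mod[OF i, of k] by simp
qed

lemma cyc_shift:
  assumes i: "i < length w"
  shows "cycle_len w ((std_perm w ^^ m) i) = cycle_len w i"
proof -
  have "(std_perm w ^^ k) ((std_perm w ^^ m) i) = (std_perm w ^^ m) i \<longleftrightarrow> (std_perm w ^^ k) i = i" for k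
  proof -
    have "(std_perm w ^^ k) ((std_perm w ^^ m) i) = (std_perm w ^^ (k + m)) i"
      by (simp only: funpow_add comp_apply)
    also have "\<dots> = (std_perm w ^^ (m + k)) i" by (simp only: add.commute)
    also have "\<dots> = (std_perm w ^^ m) ((std_perm w ^^ k) i)"
      by (simp only: funpow_add comp_apply)
    finally have "(std_perm w ^^ k) ((std_perm w ^^ m) i) = (std_perm w ^^ m) ((std_perm w ^^ k) i)" .
    then show ?thesis using inj_iter[where w=w and k=m] by (simp add: inj_eq)
  qed
  then show ?thesis unfolding cycle_len_def by simp
qed

definition sq :: "'a::linorder list \<Rightarrow> nat \<Rightarrow> nat \<Rightarrow> 'a" where
  "sq w i k = sort w ! ((std_perm w ^^ k) i)"

lemma sq_shift: "sq w i (k + m) = sq w ((std_perm w ^^ m) i) k"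
  unfolding sq_def by (simp add: funpow_add)

lemma sq_Suc: "sq w i (Suc k) = sq w (std_perm w i) k"
  unfolding sq_def by (simp add: funpow_Suc_right del: funpow.simps)

lemma sq_mod: "i < length w \<Longrightarrow> sq w i k = sq w i (k mod cycle_len w i)"
  unfolding sq_def using iter_mod by metis

lemma mono_iter:
  assumes "a < b" "b < length w" "\<forall>k. sq w a k = sq w b k"
  shows "(std_perm w ^^ k) a < (std_perm w ^^ k) b"
proof (induction k)
  case 0 then show ?case using assms by simp
next
  case (Suc k)
  have "(std_perm w ^^ k) b < length w" using iter_lt assms by blast
  moreover have "sort w ! ((std_perm w ^^ k) a) = sort w ! ((std_perm w ^^ k) b)"
    using assms(3) unfolding sq_def by blast
  ultimately show ?case using P2 Suc by simp
qed

lemma period_dvd: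
  assumes i: "i < length w" and per: "\<forall>k. sq w i (k + p) = sq w i k"
  shows "cycle_len w i dvd p"
proof -
  let ?j = "(std_perm w ^^ p) i"
  have j: "?j < length w" using iter_lt i by blast
  have eq: "\<forall>k. sq w ?j k = sq w i k" using per sq_shift by metis
  have "?j = i"
  proof (rule ccontr)
    assume ne: "?j \<noteq> i"
    show False
    proof (cases "i < ?j")
      case True
      have st: "(std_perm w ^^ k) i < (std_perm w ^^ (k + p)) i" for k
        using mono_iter[OF True j] eq by (simp add: funpow_add)
      have "i + m \<le> (std_perm w ^^ (m * p)) i" for m
      proof (induction m)
        case 0 then show ?case by simp
      next
        case (Suc m) then show ?case using st[of "m * p"] by (simp add: add.commute)
      qed
      from this[of "length w"] show False using iter_lt[OF i, of "length w * p"] by simp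
    next
      case False
      then have lt: "?j < i" using ne by simp
      have st: "(std_perm w ^^ (k + p)) i < (std_perm w ^^ k) i" for k
        using mono_iter[OF lt i] eq by (simp add: funpow_add)
      have "(std_perm w ^^ (m * p)) i + m \<le> i" for m
      proof (induction m)
        case 0 then show ?case by simp
      next
        case (Suc m) then show ?case using st[of "m * p"] by (simp add: add.commute)
      qed
      from this[of "Suc i"] show False by simp
    qed
  qed
  then show ?thesis using cyc_dvd[OF i] by simp
qed


lemma pi_word_iff:
  "i < length w \<Longrightarrow> (pi_word w u i \<noteq> None \<longleftrightarrow> u = map (sq w i) [0..<length u])"
proof (induction u arbitrary: i)
  case Nil then show ?case by simp
next
  case (Cons b u)
  have pl: "std_perm w i < length w" using P1 Cons.prems by blast
  have m: "map (sq w i) [0..<length (b # u)] = sort w ! i # map (sq w (std_perm w i)) [0..<length u]"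
    by (simp only: length_Cons map_upt_Suc sq_Suc) (simp add: sq_def)
  show ?case using Cons.IH[OF pl] pi_letter_eq[OF Cons.prems, of b] m by auto
qed

lemma sq_in: "i < length w \<Longrightarrow> sq w i k \<in> set w"
  unfolding sq_def using iter_lt by (metis length_sort nth_mem set_sort)

lemma row_len:
  assumes "i < length w" "set w \<subseteq> A"
  shows "table_row_len A w m i = map (sq w i) [0..<m]"
  unfolding table_row_len_def
proof (rule the_equality)
  show "set (map (sq w i) [0..<m]) \<subseteq> A \<and> length (map (sq w i) [0..<m]) = m \<and> pi_word w (map (sq w i) [0..<m]) i \<noteq> None"
    using pi_word_iff[OF assms(1), of "map (sq w i) [0..<m]"] sq_in[OF assms(1)] assms(2) by auto
next
  fix u assume "set u \<subseteq> A \<and> length u = m \<and> pi_word w u i \<noteq> None"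
  then show "u = map (sq w i) [0..<m]" using pi_word_iff[OF assms(1), of u] by auto
qed

lemma row_eq:
  assumes "i < length w" "set w \<subseteq> A"
  shows "table_row A w i = map (sq w i) [0..<table_width w]"
  unfolding table_row_def using row_len[OF assms] .

lemma cyc_dvd_width: "i < length w \<Longrightarrow> cycle_len w i dvd table_width w"
  unfolding table_width_def by (rule dvd_Lcm) simp

lemma width_pos: "0 < table_width w"
proof -
  have "0 \<notin> cycle_len w ` {..<length w}" using cyc_pos by fastforce
  moreover have "finite (cycle_len w ` {..<length w})" by simp
  ultimately have "Lcm (cycle_len w ` {..<length w}) \<noteq> 0" using Lcm_0_iff_nat by metis
  then show ?thesis unfolding table_width_def by (simp del: Lcm_0_iff_nat)
qed

lemma length_wpow: "length (wpow x t) = t * length x"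
  unfolding wpow_def by (induction t) auto

lemma nth_wpow: "k < t * length x \<Longrightarrow> wpow x t ! k = x ! (k mod length x)"
proof (induction t arbitrary: k)
  case 0 then show ?case by simp
next
  case (Suc t)
  have w: "wpow x (Suc t) = x @ wpow x t" unfolding wpow_def by simp
  show ?case
  proof (cases "k < length x")
    case True then show ?thesis using w by (simp add: nth_append)
  next
    case False
    then have "k - length x < t * length x" using Suc.prems by simp
    then show ?thesis using w False Suc.IH by (simp add: nth_append le_mod_geq)
  qed
qed

lemma wpow_Nil: "wpow [] t = []"
  unfolding wpow_def by simp

lemma G:
  assumes i: "i < length w" and y: "y \<noteq> []" and d1: "cycle_len w i dvd M" and d2: "length y dvd M"
    and M: "0 < M" and h: "\<forall>k<M. sq w i k = y ! (k mod length y)"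
  shows "cycle_len w i dvd length y"
proof -
  have "sq w i k = y ! (k mod length y)" for k
  proof -
    have "sq w i k = sq w i (k mod cycle_len w i)" using sq_mod[OF i] .
    also have "\<dots> = sq w i ((k mod M) mod cycle_len w i)" using d1 by (simp add: mod_mod_cancel)
    also have "\<dots> = sq w i (k mod M)" using sq_mod[OF i] by metis
    also have "\<dots> = y ! ((k mod M) mod length y)" using h M by simp
    also have "\<dots> = y ! (k mod length y)" using d2 by (simp add: mod_mod_cancel)
    finally show ?thesis .
  qed
  then have "\<forall>k. sq w i (k + length y) = sq w i k" by simp
  then show ?thesis using period_dvd[OF i] by blast
qed

lemma wpow_take: "1 \<le> t \<Longrightarrow> take (length x) (wpow x t) = x"
proof -
  assume "1 \<le> t"
  then obtain s where "t = Suc s" by (cases t) auto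
  then show ?thesis unfolding wpow_def by simp
qed

lemma is_root_unique: "is_root x u \<Longrightarrow> is_root x' u \<Longrightarrow> x = x'"
proof -
  assume a: "is_root x u" "is_root x' u"
  then obtain t t' where t: "t \<ge> 1" "u = wpow x t" "t' \<ge> 1" "u = wpow x' t'" unfolding is_root_def by blast
  have l1: "length x \<le> length x'" using a(1) t(3,4) unfolding is_root_def by blast
  have l2: "length x' \<le> length x" using a(2) t(1,2) unfolding is_root_def by blast
  have "x = take (length x) u" using wpow_take[where t=t and x=x] t(1,2) by simp
  also have "\<dots> = take (length x') u" using l1 l2 by simp
  also have "\<dots> = x'" using wpow_take[where t=t' and x=x'] t(3,4) by simp
  finally show ?thesis .
qed


lemma part1:
  assumes i: "i < length w" and A: "set w \<subseteq> A"
  defines "u \<equiv> table_row A w i" and "c \<equiv> cycle_len w i" and "l \<equiv> table_width w"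
  shows "is_root (take c u) u \<and> root u = take c u \<and> primitive (take c u)
         \<and> u = wpow (take c u) (l div c) \<and> take c u = map (sq w i) [0..<c]"
proof -
  have u: "u = map (sq w i) [0..<l]" unfolding u_def l_def using row_eq[OF i A] .
  have cpos: "0 < c" using cyc_pos[OF i] unfolding c_def by blast
  have cl: "c dvd l" unfolding c_def l_def using cyc_dvd_width[OF i] .
  have lpos: "0 < l" unfolding l_def using width_pos .
  have "c \<le> l" using cl lpos by (simp add: dvd_imp_le)
  then have x: "take c u = map (sq w i) [0..<c]" using u by (simp add: take_map)
  have lenx: "length (take c u) = c" using x by simp
  have pw: "u = wpow (take c u) (l div c)"
  proof (rule nth_equalityI)
    show "length u = length (wpow (take c u) (l div c))" using u lenx cl by (simp add: length_wpow)
  next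
    fix k assume "k < length u"
    then have k: "k < l" using u by simp
    have "wpow (take c u) (l div c) ! k = take c u ! (k mod c)"
      using nth_wpow[of k "l div c" "take c u"] k cl lenx by simp
    also have "\<dots> = sq w i (k mod c)" using x cpos by simp
    also have "\<dots> = sq w i k" using sq_mod[OF i, of k] unfolding c_def by simp
    finally show "u ! k = wpow (take c u) (l div c) ! k" using u k by simp
  qed
  have t1: "1 \<le> l div c" using \<open>c \<le> l\<close> cpos by (simp add: div_greater_zero_iff Suc_le_eq)
  have min: "c \<le> length y" if h: "1 \<le> t" "u = wpow y t" for y t
  proof -
    have ly: "length u = t * length y" using h by (simp add: length_wpow)
    then have y: "y \<noteq> []" using u lpos by auto
    have d2: "length y dvd l" using ly u by simp
    have "\<forall>k<l. sq w i k = y ! (k mod length y)"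
    proof (intro allI impI)
      fix k assume k: "k < l"
      have a1: "sq w i k = u ! k" using u k by simp
      have "k < t * length y" using ly u k by simp
      then have a2: "wpow y t ! k = y ! (k mod length y)" by (rule nth_wpow)
      have a3: "u ! k = wpow y t ! k" using h(2) by simp
      from a1 a2 a3 show "sq w i k = y ! (k mod length y)" by simp
    qed
    then have "c dvd length y" using G[OF i y _ d2 lpos] cl unfolding c_def by blast
    then show ?thesis using y by (simp add: dvd_imp_le)
  qed
  have isr: "is_root (take c u) u"
    unfolding is_root_def
  proof (intro conjI allI impI)
    show "\<exists>t\<ge>1. u = wpow (take c u) t" using pw t1 by blast
  next
    fix y t assume yt: "1 \<le> t \<and> u = wpow y t"
    have "c \<le> length y" using min[of t y] yt by blast
    then show "length (take c u) \<le> length y" using lenx by simp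
  qed
  have rt: "root u = take c u"
    unfolding root_def by (rule the_equality[where P="\<lambda>x. is_root x u", OF isr]) (rule is_root_unique[OF _ isr])
  have prim: "primitive (take c u)"
    unfolding primitive_def
  proof (intro allI impI)
    fix y t assume h: "take c u = wpow y t"
    have ly: "c = t * length y" using h lenx length_wpow[of y t] by simp
    then have y: "y \<noteq> []" and tp: "0 < t" using cpos by auto
    have d2: "length y dvd c" using ly by simp
    have "\<forall>k<c. sq w i k = y ! (k mod length y)"
    proof (intro allI impI)
      fix k assume k: "k < c"
      have "sq w i k = take c u ! k" using x k by simp
      also have "\<dots> = y ! (k mod length y)" using h nth_wpow[of k t y] ly k by simp
      finally show "sq w i k = y ! (k mod length y)" .
    qed
    then have "c dvd length y" using G[OF i y _ d2 cpos] unfolding c_def by simp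
    then have "c \<le> length y" using y by (simp add: dvd_imp_le)
    then have "t * length y \<le> 1 * length y" using ly by simp
    then have "t \<le> 1" using y by (simp only: mult_le_cancel2) simp
    then show "t = 1" using tp by simp
  qed
  show ?thesis using isr rt prim pw x by blast
qed


lemma root_row:
  assumes "j < length w" "set w \<subseteq> A"
  shows "root (table_row A w j) = map (sq w j) [0..<cycle_len w j]"
  using part1[OF assms] by simp

lemma root_rot:
  assumes j: "j < length w" and A: "set w \<subseteq> A"
  shows "root (table_row A w ((std_perm w ^^ m) j)) = rotate m (root (table_row A w j))"
proof -
  have j': "(std_perm w ^^ m) j < length w" using iter_lt[OF j] .
  have c: "cycle_len w ((std_perm w ^^ m) j) = cycle_len w j" using cyc_shift[OF j] .
  have cpos: "0 < cycle_len w j" using cyc_pos[OF j] by blast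
  show ?thesis unfolding root_row[OF j' A] root_row[OF j A] c
  proof (rule nth_equalityI)
    show "length (map (sq w ((std_perm w ^^ m) j)) [0..<cycle_len w j]) =
          length (rotate m (map (sq w j) [0..<cycle_len w j]))" by simp
  next
    fix k assume "k < length (map (sq w ((std_perm w ^^ m) j)) [0..<cycle_len w j])"
    then have k: "k < cycle_len w j" by simp
    have "rotate m (map (sq w j) [0..<cycle_len w j]) ! k = map (sq w j) [0..<cycle_len w j] ! ((m + k) mod cycle_len w j)"
      using k by (simp add: nth_rotate)
    also have "\<dots> = sq w j ((m + k) mod cycle_len w j)" using cpos by simp
    also have "\<dots> = sq w j (k + m)" using sq_mod[OF j, of "k + m"] by (simp add: add.commute)
    also have "\<dots> = sq w ((std_perm w ^^ m) j) k" by (rule sq_shift)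
    finally show "map (sq w ((std_perm w ^^ m) j)) [0..<cycle_len w j] ! k =
          rotate m (map (sq w j) [0..<cycle_len w j]) ! k" using k by simp
  qed
qed

lemma part2:
  assumes i: "i < length w" and A: "set w \<subseteq> A"
    and cj: "conjugate (take (cycle_len w i) (table_row A w i)) y"
  shows "(\<exists>j<length w. root (table_row A w j) = y) \<and>
          card {j. j < length w \<and> root (table_row A w j) = y} =
          card {j. j < length w \<and> root (table_row A w j) = take (cycle_len w i) (table_row A w i)}"
proof -
  let ?x = "take (cycle_len w i) (table_row A w i)"
  let ?R = "\<lambda>j. root (table_row A w j)"
  let ?P = "std_perm w"
  have rx: "?R i = ?x" using part1[OF i A] by blast
  have lx: "length ?x = cycle_len w i" using root_row[OF i A] rx by simp
  obtain p q where pq: "?x = p @ q" "y = q @ p" using cj unfolding conjugate_def by blast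
  define m where "m = length p"
  have y: "y = rotate m ?x" unfolding m_def pq by (simp add: rotate_append)
  have mle: "m \<le> length ?x" unfolding m_def pq by simp
  have ly: "length y = length ?x" using y by simp
  have xy: "rotate (length ?x - m) y = ?x"
  proof -
    have "rotate (length ?x - m) y = rotate (length ?x - m + m) ?x" unfolding y by (rule rotate_rotate)
    also have "length ?x - m + m = length ?x" using mle by simp
    finally show ?thesis by simp
  qed
  have ex: "\<exists>j<length w. ?R j = y"
  proof (intro exI conjI)
    show "(?P ^^ m) i < length w" using iter_lt[OF i] .
    show "?R ((?P ^^ m) i) = y" using root_rot[OF i A, of m] rx y by simp
  qed
  let ?Sx = "{j. j < length w \<and> ?R j = ?x}"
  let ?Sy = "{j. j < length w \<and> ?R j = y}"
  have c1: "card ?Sx \<le> card ?Sy"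
  proof (rule card_inj_on_le)
    show "inj_on (?P ^^ m) ?Sx" by (rule inj_on_subset[OF inj_iter subset_UNIV])
    show "(?P ^^ m) ` ?Sx \<subseteq> ?Sy"
    proof
      fix z assume "z \<in> (?P ^^ m) ` ?Sx"
      then obtain j where j: "j < length w" "?R j = ?x" "z = (?P ^^ m) j" by blast
      then show "z \<in> ?Sy" using iter_lt[OF j(1)] root_rot[OF j(1) A, of m] y by simp
    qed
    show "finite ?Sy" by simp
  qed
  have c2: "card ?Sy \<le> card ?Sx"
  proof (rule card_inj_on_le)
    show "inj_on (?P ^^ (length ?x - m)) ?Sy" by (rule inj_on_subset[OF inj_iter subset_UNIV])
    show "(?P ^^ (length ?x - m)) ` ?Sy \<subseteq> ?Sx"
    proof
      fix z assume "z \<in> (?P ^^ (length ?x - m)) ` ?Sy"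
      then obtain j where j: "j < length w" "?R j = y" "z = (?P ^^ (length ?x - m)) j" by blast
      then show "z \<in> ?Sx" using iter_lt[OF j(1)] root_rot[OF j(1) A, of "length ?x - m"] xy by simp
    qed
    show "finite ?Sx" by simp
  qed
  show ?thesis using ex c1 c2 by simp
qed

lemma lex_aux:
  "i < j \<Longrightarrow> j < length w \<Longrightarrow> lexordp_eq (map (sq w i) [0..<m]) (map (sq w j) [0..<m])"
proof (induction m arbitrary: i j)
  case 0 then show ?case by simp
next
  case (Suc m)
  have e: "\<And>i. map (sq w i) [0..<Suc m] = sort w ! i # map (sq w (std_perm w i)) [0..<m]"
    by (simp only: map_upt_Suc sq_Suc) (simp add: sq_def)
  have le: "sort w ! i \<le> sort w ! j" using Suc.prems by (intro sorted_nth_mono) auto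
  show ?case
  proof (cases "sort w ! i < sort w ! j")
    case True then show ?thesis unfolding e by simp
  next
    case False
    then have eq: "sort w ! i = sort w ! j" using le by simp
    have "std_perm w i < std_perm w j" using P2[OF Suc.prems eq] .
    moreover have "std_perm w j < length w" using P1 Suc.prems by blast
    ultimately have "lexordp_eq (map (sq w (std_perm w i)) [0..<m]) (map (sq w (std_perm w j)) [0..<m])"
      using Suc.IH by blast
    then show ?thesis unfolding e using eq by simp
  qed
qed

lemma part3:
  assumes "i \<le> j" "j < length w" "set w \<subseteq> A"
  shows "lexordp_eq (table_row A w i) (table_row A w j)"
proof (cases "i = j")
  case True then show ?thesis by (simp add: lexordp_eq_refl)
next
  case False
  then have "i < j" using assms by simp
  then show ?thesis using row_eq[OF _ assms(3)] assms lex_aux by simp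
qed

lemma part4:
  assumes i: "i < length w" and A: "set w \<subseteq> A"
  shows "last (table_row A w i) = w ! i"
proof -
  let ?l = "table_width w"
  let ?j = "(std_perm w ^^ (?l - 1)) i"
  have lpos: "0 < ?l" by (rule width_pos)
  have h1: "last (table_row A w i) = sq w i (?l - 1)"
    unfolding row_eq[OF i A] using lpos by (simp add: last_map last_conv_nth)
  have "(std_perm w ^^ ?l) i = (std_perm w ^^ Suc (?l - 1)) i" using lpos by simp
  also have "\<dots> = std_perm w ?j" by (simp only: funpow.simps comp_apply)
  finally have h2: "(std_perm w ^^ ?l) i = std_perm w ?j" .
  have h3: "(std_perm w ^^ ?l) i = i" using cyc_dvd[OF i] cyc_dvd_width[OF i] by blast
  have "w ! (std_perm w ?j) = sort w ! ?j" using P1[OF iter_lt[OF i]] by blast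
  then have "w ! i = sort w ! ?j" using h2 h3 by simp
  then show ?thesis using h1 unfolding sq_def by simp
qed

theorem proposition1p2p9:
  fixes A :: "'a::linorder set" and w :: "'a list" and n :: nat
  assumes "finite A" and "set w \<subseteq> A" and "length w = n" and "n \<ge> 1"
  shows
    "(\<forall>i<n. is_root (take (cycle_len w i) (table_row A w i)) (table_row A w i)
          \<and> root (table_row A w i) = take (cycle_len w i) (table_row A w i)
          \<and> primitive (take (cycle_len w i) (table_row A w i))
          \<and> table_row A w i = wpow (take (cycle_len w i) (table_row A w i))
                                  (table_width w div cycle_len w i))
     \<and> (\<forall>i<n. \<forall>y. conjugate (take (cycle_len w i) (table_row A w i)) y \<longrightarrow>
          (\<exists>j<n. root (table_row A w j) = y) \<and>
          card {j. j < n \<and> root (table_row A w j) = y} =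
          card {j. j < n \<and> root (table_row A w j) = take (cycle_len w i) (table_row A w i)})
     \<and> (\<forall>i j. i \<le> j \<and> j < n \<longrightarrow> lexordp_eq (table_row A w i) (table_row A w j))
     \<and> map (\<lambda>i. last (table_row A w i)) [0..<n] = w"
proof (intro conjI allI impI)
  fix i assume "i < n"
  then have i: "i < length w" using assms by simp
  show "is_root (take (cycle_len w i) (table_row A w i)) (table_row A w i)"
    "root (table_row A w i) = take (cycle_len w i) (table_row A w i)"
    "primitive (take (cycle_len w i) (table_row A w i))"
    "table_row A w i = wpow (take (cycle_len w i) (table_row A w i)) (table_width w div cycle_len w i)"
    using part1[OF i assms(2)] by blast+
next
  fix i y assume "i < n" "conjugate (take (cycle_len w i) (table_row A w i)) y"
  then show "\<exists>j<n. root (table_row A w j) = y"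
    "card {j. j < n \<and> root (table_row A w j) = y} =
     card {j. j < n \<and> root (table_row A w j) = take (cycle_len w i) (table_row A w i)}"
    using part2[OF _ assms(2)] assms(3) by auto
next
  fix i j assume "i \<le> j \<and> j < n"
  then show "lexordp_eq (table_row A w i) (table_row A w j)" using part3 assms by auto
next
  show "map (\<lambda>i. last (table_row A w i)) [0..<n] = w"
  proof (rule nth_equalityI)
    show "length (map (\<lambda>i. last (table_row A w i)) [0..<n]) = length w" using assms by simp
  next
    fix k assume "k < length (map (\<lambda>i. last (table_row A w i)) [0..<n])"
    then have "k < length w" using assms by simp
    then show "map (\<lambda>i. last (table_row A w i)) [0..<n] ! k = w ! k" using part4[OF _ assms(2)] assms by simp
  qed
qed

end
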